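(* For all $x>0$ and $y>0$, $$\Gamma(x,y)\ \ge\ \exp\big((x+y-2)\,\Gamma'(1)\big).$$
   Context: For $x>0,y>0$ the Bigamma function is the (convergent) improper integral $\Gamma(x,y):=\int_0^1(-\ln t)^{x-1}\big(-\ln(1-t)\big)^{y-1}\,dt$. $\Gamma'(1)$ is the derivative at $1$ of Euler's gamma function $\Gamma(x)=\int_0^\infty t^{x-1}e^{-t}dt$. *)

theory Defs
  imports "HOL-Analysis.Analysis"
begin

text \<open>Bigamma function: the (convergent, nonnegative-integrand) improper integral
  over (0,1), rendered as a Lebesgue integral.\<close>
definition Bigamma :: "real \<Rightarrow> real \<Rightarrow> real" where
  "Bigamma x y = (LBINT t:{0<..<1}. (- ln t) powr (x - 1) * (- ln (1 - t)) powr (y - 1))"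

end

theory Submission imports Defs begin

lemma subst_exp:
  fixes F :: "real \<Rightarrow> real"
  shows "((\<lambda>u. exp(-u) * F (exp(-u))) absolutely_integrable_on {0<..} \<and>
          integral {0<..} (\<lambda>u. exp(-u) * F (exp(-u))) = c) \<longleftrightarrow>
         (F absolutely_integrable_on {0<..<1} \<and> integral {0<..<1} F = c)"
proof -
  have img: "(\<lambda>u. exp(-u)) ` {0<..} = {0<..<1::real}"
  proof (rule set_eqI, rule iffI)
    fix t assume "t \<in> {0<..<1::real}"
    then have "t = exp (- (- ln t))" "- ln t \<in> {0<..}" by auto
    then show "t \<in> (\<lambda>u. exp(-u)) ` {0<..}" by blast
  qed auto
  have "((\<lambda>u. \<bar>- exp(-u)\<bar> * F (exp(-u))) absolutely_integrable_on {0<..} \<and>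
          integral {0<..} (\<lambda>u. \<bar>- exp(-u)\<bar> * F (exp(-u))) = c) \<longleftrightarrow>
         (F absolutely_integrable_on ((\<lambda>u. exp(-u)) ` {0<..}) \<and> integral ((\<lambda>u. exp(-u)) ` {0<..}) F = c)"
    by (rule has_absolute_integral_change_of_variables_1') (auto intro!: derivative_eq_intros inj_onI)
  then show ?thesis by (simp add: img)
qed

lemma subst_refl:
  fixes F :: "real \<Rightarrow> real"
  assumes "F absolutely_integrable_on {0<..<1}" "integral {0<..<1} F = c"
  shows "(\<lambda>t. F (1 - t)) absolutely_integrable_on {0<..<1}" "integral {0<..<1} (\<lambda>t. F (1 - t)) = c"
proof -
  have img: "(\<lambda>u. 1 - u) ` {0<..<1} = {0<..<1::real}"
  proof (rule set_eqI, rule iffI)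
    fix t assume "t \<in> {0<..<1::real}"
    then have "t = 1 - (1 - t)" "1 - t \<in> {0<..<1}" by auto
    then show "t \<in> (\<lambda>u. 1 - u) ` {0<..<1}" by blast
  qed auto
  have "((\<lambda>u. \<bar>- 1\<bar> * F (1 - u)) absolutely_integrable_on {0<..<1} \<and>
          integral {0<..<1} (\<lambda>u. \<bar>- 1\<bar> * F (1 - u)) = c) \<longleftrightarrow>
         (F absolutely_integrable_on ((\<lambda>u. 1 - u) ` {0<..<1}) \<and> integral ((\<lambda>u. 1 - u) ` {0<..<1}) F = c)"
    by (rule has_absolute_integral_change_of_variables_1') (auto intro!: derivative_eq_intros inj_onI)
  then show "(\<lambda>t. F (1 - t)) absolutely_integrable_on {0<..<1}" "integral {0<..<1} (\<lambda>t. F (1 - t)) = c"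
    using assms by (simp_all add: img)
qed

lemma Gamma_lnint:
  fixes h :: real
  assumes h: "h > -1"
  shows "(\<lambda>t. (- ln t) powr h) absolutely_integrable_on {0<..<1}"
        "integral {0<..<1} (\<lambda>t. (- ln t) powr h) = Gamma (h + 1)"
proof -
  have "((\<lambda>t. t powr (h + 1 - 1) / exp t) has_integral Gamma (h+1)) {0..}"
    by (rule Gamma_integral_real) (use h in simp)
  then have "((\<lambda>t. t powr (h + 1 - 1) / exp t) has_integral Gamma (h+1)) {0<..}"
    by (rule has_integral_spike_set_eq[THEN iffD1, rotated -1])
       (auto intro: negligible_subset[of "{0}"])
  then have *: "((\<lambda>u. exp(-u) * (- ln (exp (-u))) powr h) has_integral Gamma (h+1)) {0<..}"
    by (rule has_integral_eq[rotated]) (simp add: ln_inverse exp_minus divide_inverse mult.commute)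
  have "(\<lambda>u. exp(-u) * (- ln (exp (-u))) powr h) absolutely_integrable_on {0<..}"
    using * by (intro nonnegative_absolutely_integrable_1) (auto simp: integrable_on_def)
  moreover have "integral {0<..} (\<lambda>u. exp(-u) * (- ln (exp (-u))) powr h) = Gamma (h+1)"
    using * by (rule integral_unique)
  ultimately have "(\<lambda>t. (- ln t) powr h) absolutely_integrable_on {0<..<1} \<and>
        integral {0<..<1} (\<lambda>t. (- ln t) powr h) = Gamma (h + 1)"
    using subst_exp[of "\<lambda>t. (- ln t) powr h"] by blast
  then show "(\<lambda>t. (- ln t) powr h) absolutely_integrable_on {0<..<1}"
        "integral {0<..<1} (\<lambda>t. (- ln t) powr h) = Gamma (h + 1)" by auto
qed

lemma ln_bound:
  fixes v :: real assumes v: "v > 0"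
  shows "\<bar>ln v\<bar> \<le> 2 * v powr (1/2) + 2 * v powr (-1/2)"
proof -
  define w where "w = v powr (1/2)"
  have w: "w > 0" using v by (simp add: w_def)
  have lv: "ln v = 2 * ln w" using v by (simp add: w_def ln_powr)
  have vi: "v powr (-1/2) = 1 / w"
  proof -
    have "v powr (-1/2) = v powr (-(1/2))" by simp
    also have "\<dots> = 1 / v powr (1/2)" by (rule powr_minus_divide)
    finally show ?thesis unfolding w_def .
  qed
  have "ln w \<le> w" using w ln_le_minus_one[of w] by linarith
  moreover have "- ln w \<le> 1 / w" using w ln_le_minus_one[of "1/w"] by (simp add: ln_div)
  moreover have "1/w > 0" using w by simp
  ultimately show ?thesis using w unfolding lv vi w_def[symmetric] abs_le_iff by linarith
qed

lemma integrable_of_abs: "f absolutely_integrable_on S \<Longrightarrow> f integrable_on S"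
  for f :: "real \<Rightarrow> real"
  using set_lebesgue_integral_eq_integral(1) by blast

lemma lnln_int: "(\<lambda>t. ln (- ln t)) absolutely_integrable_on {0<..<1::real}"
proof (rule measurable_bounded_by_integrable_imp_absolutely_integrable)
  show "(\<lambda>t. ln (- ln t)) \<in> borel_measurable (lebesgue_on {0<..<1::real})"
    by (rule continuous_imp_measurable_on_sets_lebesgue)
       (intro continuous_on_ln continuous_on_minus continuous_on_id, auto)
  show "(\<lambda>t. 2 * (- ln t) powr (1/2) + 2 * (- ln t) powr (-1/2)) integrable_on {0<..<1::real}"
    using Gamma_lnint(1)[of "1/2"] Gamma_lnint(1)[of "-1/2"]
    by (intro integrable_add integrable_on_mult_right integrable_of_abs) auto
  fix t :: real assume "t \<in> {0<..<1}"
  then have "- ln t > 0" by auto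
  then show "norm (ln (- ln t)) \<le> 2 * (- ln t) powr (1/2) + 2 * (- ln t) powr (-1/2)"
    using ln_bound by simp
qed auto

lemma integral_one: "integral {0<..<1::real} (\<lambda>t. 1::real) = 1"
proof -
  have "integral {0<..<1::real} (\<lambda>t. 1::real) = integral {0..1::real} (\<lambda>t. 1)"
    by (rule integral_open_interval_real[symmetric])
  then show ?thesis by simp
qed

lemma integrable_one: "(\<lambda>t. 1::real) integrable_on {0<..<1::real}"
  using integrable_on_open_interval_real[of "\<lambda>t. 1::real" 0 1] integrable_const_ivl[of "0::real" 1 "1::real"] by blast

lemma Gamma_tangent:
  fixes h :: real assumes h: "h > -1"
  shows "Gamma (h + 1) \<ge> 1 + h * integral {0<..<1} (\<lambda>t. ln (- ln t))"
proof -
  have i1: "(\<lambda>t. ln (- ln t)) integrable_on {0<..<1::real}" by (rule integrable_of_abs[OF lnln_int])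
  have "integral {0<..<1} (\<lambda>t. 1 + h * ln (- ln t)) = 
        integral {0<..<1::real} (\<lambda>t. 1) + integral {0<..<1} (\<lambda>t. h * ln (- ln t))"
    by (rule integral_add[OF integrable_one integrable_on_mult_right[OF i1]])
  also have "\<dots> = 1 + h * integral {0<..<1} (\<lambda>t. ln (- ln t))"
    using integral_mult[OF i1, of h] integral_one by simp
  finally have "1 + h * integral {0<..<1} (\<lambda>t. ln (- ln t)) =
        integral {0<..<1} (\<lambda>t. 1 + h * ln (- ln t))" by simp
  also have "\<dots> \<le> integral {0<..<1} (\<lambda>t. (- ln t) powr h)"
  proof (rule integral_le)
    show "(\<lambda>t. 1 + h * ln (- ln t)) integrable_on {0<..<1}"
      by (intro integrable_add integrable_one integrable_on_mult_right integrable_of_abs lnln_int)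
    show "(\<lambda>t. (- ln t) powr h) integrable_on {0<..<1}"
      by (rule integrable_of_abs Gamma_lnint h)+
    fix t :: real assume "t \<in> {0<..<1}"
    then have "- ln t > 0" by auto
    then show "1 + h * ln (- ln t) \<le> (- ln t) powr h"
      by (simp add: powr_def mult.commute)
  qed
  also have "\<dots> = Gamma (h + 1)" by (rule Gamma_lnint h)+
  finally show ?thesis .
qed

lemma deriv_Gamma_1: "deriv (Gamma :: real \<Rightarrow> real) 1 = integral {0<..<1} (\<lambda>t. ln (- ln t))"
proof -
  define A where "A = integral {0<..<1::real} (\<lambda>t. ln (- ln t))"
  have "1 \<notin> (\<int>\<^sub>\<le>\<^sub>0 :: real set)" by (auto elim!: nonpos_Ints_cases)
  then have D: "((Gamma :: real \<Rightarrow> real) has_field_derivative Gamma 1 * Digamma 1) (at 1)"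
    by (rule has_field_derivative_Gamma)
  have D2: "((\<lambda>z::real. Gamma z - (1 + (z - 1) * A)) has_field_derivative (Gamma 1 * Digamma 1 - A)) (at 1)"
    using D by (auto intro!: derivative_eq_intros)
  have "Gamma 1 * Digamma 1 - A = 0"
  proof (rule DERIV_local_min[OF D2, of 1], simp, safe)
    fix z :: real assume "\<bar>1 - z\<bar> < 1"
    then have "z - 1 > -1" by auto
    from Gamma_tangent[OF this] show "Gamma 1 - (1 + (1 - 1) * A) \<le> Gamma z - (1 + (z - 1) * A)"
      by (simp add: A_def)
  qed
  with DERIV_imp_deriv[OF D] show ?thesis by (simp add: A_def)
qed

lemma young_max:
  fixes U V th :: real
  assumes "U \<ge> 0" "V \<ge> 0" "0 < th" "th < 1"
  shows "U powr th * V powr (1 - th) \<le> U + V"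
proof (cases "max U V = 0")
  case True
  then have "U = 0" "V = 0" using assms by (auto simp: max_def split: if_splits)
  then show ?thesis by simp
next
  case False
  define M where "M = max U V"
  have M: "M > 0" using False assms by (auto simp: M_def)
  have "U powr th \<le> M powr th" using assms by (intro powr_mono2) (auto simp: M_def)
  moreover have "V powr (1 - th) \<le> M powr (1 - th)" using assms by (intro powr_mono2) (auto simp: M_def)
  ultimately have "U powr th * V powr (1 - th) \<le> M powr th * M powr (1 - th)"
    by (intro mult_mono) auto
  also have "\<dots> = M" using M by (simp add: powr_add[symmetric])
  also have "\<dots> \<le> U + V" using assms by (auto simp: M_def)
  finally show ?thesis .
qed

lemma lnb_int: "(\<lambda>t. ln (- ln (1 - t))) absolutely_integrable_on {0<..<1::real}"
     "integral {0<..<1::real} (\<lambda>t. ln (- ln (1 - t))) = integral {0<..<1} (\<lambda>t. ln (- ln t))"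
  using subst_refl[OF lnln_int refl] by auto

lemma Gamma_lnint2:
  fixes h :: real assumes h: "h > -1"
  shows "(\<lambda>t. (- ln (1 - t)) powr h) absolutely_integrable_on {0<..<1}"
        "integral {0<..<1} (\<lambda>t. (- ln (1 - t)) powr h) = Gamma (h + 1)"
  using subst_refl[OF Gamma_lnint[OF h]] by auto

lemma E_int:
  fixes p q :: real assumes p: "p > -1" and q: "q > -1"
  shows "(\<lambda>t. (- ln t) powr p * (- ln (1 - t)) powr q) absolutely_integrable_on {0<..<1}"
proof -
  have bound: "\<exists>g. g integrable_on {0<..<1} \<and>
     (\<forall>t\<in>{0<..<1::real}. (- ln t) powr p * (- ln (1 - t)) powr q \<le> g t)"
  proof (cases "p \<ge> 0 \<or> q \<ge> 0")
    case True
    have "\<exists>th. 0 < th \<and> th < 1 \<and> p / th > -1 \<and> q / (1 - th) > -1"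
    proof (cases "p \<ge> 0")
      case pp: True
      show ?thesis
      proof (cases "q \<ge> 0")
        case True
        then show ?thesis using pp by (intro exI[of _ "1/2"]) auto
      next
        case False
        have "q / (1 - (1 + q) / 2) = 2 * q / (1 - q)" using q by (simp add: field_simps)
        moreover have "2 * q / (1 - q) > -1" using q False by (simp add: field_simps)
        moreover have "p / ((1 + q) / 2) > -1"
        proof -
          have "p / ((1 + q) / 2) \<ge> 0" using pp q by (intro divide_nonneg_pos) auto
          then show ?thesis by linarith
        qed
        ultimately show ?thesis using pp q False
          by (intro exI[of _ "(1 + q) / 2"] conjI) (simp_all del: divide_divide_eq_right)
      qed
    next
      case False
      with True have qq: "q \<ge> 0" by auto
      have e: "p / ((1 - p) / 2) = 2 * p / (1 - p)" using p by (simp add: field_simps)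
      have "2 * p / (1 - p) > -1" using p False by (simp add: field_simps)
      then have "p / ((1 - p) / 2) > -1" by (subst e)
      moreover have "1 - (1 - p) / 2 > 0" using p by simp
      moreover have "q / (1 - (1 - p) / 2) > -1"
      proof -
        have "q / (1 - (1 - p) / 2) \<ge> 0" using qq p by (intro divide_nonneg_pos) auto
        then show ?thesis by linarith
      qed
      ultimately show ?thesis using qq p False
        by (intro exI[of _ "(1 - p) / 2"] conjI) (simp_all del: divide_divide_eq_right)
    qed
    then obtain th where th: "0 < th" "th < 1" "p / th > -1" "q / (1 - th) > -1" by blast
    show ?thesis
    proof (intro exI conjI ballI)
      show "(\<lambda>t. (- ln t) powr (p / th) + (- ln (1 - t)) powr (q / (1 - th))) integrable_on {0<..<1}"
        by (intro integrable_add integrable_of_abs Gamma_lnint(1) Gamma_lnint2(1) th)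
      fix t :: real assume "t \<in> {0<..<1}"
      then have a: "- ln t > 0" and b: "- ln (1 - t) > 0" by auto
      have "(- ln t) powr p * (- ln (1 - t)) powr q =
            ((- ln t) powr (p / th)) powr th * ((- ln (1 - t)) powr (q / (1 - th))) powr (1 - th)"
        using th by (simp add: powr_powr)
      also have "\<dots> \<le> (- ln t) powr (p / th) + (- ln (1 - t)) powr (q / (1 - th))"
        using th by (intro young_max) auto
      finally show "(- ln t) powr p * (- ln (1 - t)) powr q \<le>
                    (- ln t) powr (p / th) + (- ln (1 - t)) powr (q / (1 - th))" .
    qed
  next
    case False
    then have pn: "p < 0" and qn: "q < 0" by auto
    show ?thesis
    proof (intro exI conjI ballI)
      show "(\<lambda>t. ln 2 powr p * (- ln (1 - t)) powr q + ln 2 powr q * (- ln t) powr p) integrable_on {0<..<1}"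
        by (intro integrable_add integrable_on_mult_right integrable_of_abs Gamma_lnint(1) Gamma_lnint2(1) p q)
      fix t :: real assume t: "t \<in> {0<..<1}"
      then have a: "- ln t > 0" and b: "- ln (1 - t) > 0" by auto
      have l2: "ln 2 > (0::real)" by simp
      have pa: "(- ln t) powr p > 0" "(- ln (1 - t)) powr q > 0" using a b by auto
      show "(- ln t) powr p * (- ln (1 - t)) powr q \<le>
            ln 2 powr p * (- ln (1 - t)) powr q + ln 2 powr q * (- ln t) powr p"
      proof (cases "t \<le> 1/2")
        case True
        then have "ln t \<le> ln (1/2)" using t by (subst ln_le_cancel_iff) auto
        then have "- ln t \<ge> ln 2" by (simp add: ln_div)
        then have "(- ln t) powr p \<le> ln 2 powr p" using pn l2 by (intro powr_mono2') auto
        then have "(- ln t) powr p * (- ln (1 - t)) powr q \<le> ln 2 powr p * (- ln (1 - t)) powr q"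
          using pa by (intro mult_right_mono) auto
        moreover have "ln 2 powr q * (- ln t) powr p \<ge> 0" by simp
        ultimately show ?thesis by linarith
      next
        case False
        then have "ln (1 - t) \<le> ln (1/2)" using t by (subst ln_le_cancel_iff) auto
        then have "- ln (1 - t) \<ge> ln 2" by (simp add: ln_div)
        then have "(- ln (1 - t)) powr q \<le> ln 2 powr q" using qn l2 by (intro powr_mono2') auto
        then have "(- ln t) powr p * (- ln (1 - t)) powr q \<le> ln 2 powr q * (- ln t) powr p"
          using pa by (subst mult.commute, intro mult_right_mono) auto
        moreover have "ln 2 powr p * (- ln (1 - t)) powr q \<ge> 0" by simp
        ultimately show ?thesis by linarith
      qed
    qed
  qed
  then obtain g where g: "g integrable_on {0<..<1}"
     "\<And>t. t \<in> {0<..<1::real} \<Longrightarrow> (- ln t) powr p * (- ln (1 - t)) powr q \<le> g t" by blast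
  show ?thesis
  proof (rule measurable_bounded_by_integrable_imp_absolutely_integrable[OF _ _ g(1)])
    show "(\<lambda>t. (- ln t) powr p * (- ln (1 - t)) powr q) \<in> borel_measurable (lebesgue_on {0<..<1::real})"
      by (rule continuous_imp_measurable_on_sets_lebesgue)
         (intro continuous_on_mult continuous_on_powr continuous_on_ln continuous_on_minus continuous_on_id continuous_on_diff continuous_on_const, auto)
    fix t :: real assume "t \<in> {0<..<1}"
    then show "norm ((- ln t) powr p * (- ln (1 - t)) powr q) \<le> g t" using g(2) by simp
  qed auto
qed

theorem mainTheorem11:
  fixes x y :: real
  assumes "x > 0" and "y > 0"
  shows "Bigamma x y \<ge> exp ((x + y - 2) * deriv (Gamma :: real \<Rightarrow> real) 1)"
proof -
  define p where "p = x - 1"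
  define q where "q = y - 1"
  have p: "p > -1" and q: "q > -1" using assms by (auto simp: p_def q_def)
  define A where "A = integral {0<..<1::real} (\<lambda>t. ln (- ln t))"
  define c where "c = (x + y - 2) * deriv (Gamma :: real \<Rightarrow> real) 1"
  have cA: "c = (p + q) * A" using deriv_Gamma_1 by (simp add: c_def A_def p_def q_def)
  define E where "E = (\<lambda>t::real. (- ln t) powr p * (- ln (1 - t)) powr q)"
  have Eint: "E absolutely_integrable_on {0<..<1}" using E_int[OF p q] by (simp add: E_def)
  have big: "Bigamma x y = integral {0<..<1} E"
  proof -
    have meas: "(\<lambda>t. indicator {0<..<1::real} t *\<^sub>R E t) \<in> borel_measurable lborel"
      unfolding E_def by measurable
    have "Bigamma x y = (LINT t:{0<..<1}|lborel. E t)" by (simp add: Bigamma_def E_def p_def q_def)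
    also have "\<dots> = (LINT t:{0<..<1}|lebesgue. E t)"
      unfolding set_lebesgue_integral_def using integral_completion[OF meas] by simp
    also have "\<dots> = integral {0<..<1} E" by (rule set_lebesgue_integral_eq_integral(2)[OF Eint])
    finally show ?thesis .
  qed
  define K1 where "K1 = exp c * (1 - c)"
  define K2 where "K2 = exp c * p"
  define K3 where "K3 = exp c * q"
  have h1: "((\<lambda>t. 1::real) has_integral 1) {0<..<1::real}"
    using integrable_integral[OF integrable_one] integral_one by simp
  have h2: "((\<lambda>t. ln (- ln t)) has_integral A) {0<..<1::real}"
    unfolding A_def by (rule integrable_integral[OF integrable_of_abs[OF lnln_int]])
  have h3: "((\<lambda>t. ln (- ln (1 - t))) has_integral A) {0<..<1::real}"
    using integrable_integral[OF integrable_of_abs[OF lnb_int(1)]] lnb_int(2) unfolding A_def by simp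
  have lin: "((\<lambda>t. K1 * 1 + K2 * ln (- ln t) + K3 * ln (- ln (1 - t))) has_integral
               (K1 * 1 + K2 * A + K3 * A)) {0<..<1::real}"
    by (intro has_integral_add has_integral_mult_right h1 h2 h3)
  have val: "K1 * 1 + K2 * A + K3 * A = exp c"
    unfolding K1_def K2_def K3_def cA by (simp add: algebra_simps)
  have "exp c = integral {0<..<1} (\<lambda>t. K1 * 1 + K2 * ln (- ln t) + K3 * ln (- ln (1 - t)))"
    using integral_unique[OF lin] val by simp
  also have "\<dots> \<le> integral {0<..<1} E"
  proof (rule integral_le)
    show "(\<lambda>t. K1 * 1 + K2 * ln (- ln t) + K3 * ln (- ln (1 - t))) integrable_on {0<..<1}"
      using lin by (auto simp: integrable_on_def)
    show "E integrable_on {0<..<1}" by (rule integrable_of_abs[OF Eint])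
    fix t :: real assume t: "t \<in> {0<..<1}"
    then have a: "- ln t > 0" and b: "- ln (1 - t) > 0" by auto
    define u where "u = p * ln (- ln t) + q * ln (- ln (1 - t))"
    have Eu: "E t = exp u"
      using a b by (simp add: E_def u_def powr_def exp_add)
    have "K1 * 1 + K2 * ln (- ln t) + K3 * ln (- ln (1 - t)) = exp c * (1 + (u - c))"
      unfolding K1_def K2_def K3_def u_def by (simp add: algebra_simps)
    also have "\<dots> \<le> exp c * exp (u - c)"
      by (intro mult_left_mono exp_ge_add_one_self) auto
    also have "\<dots> = E t" by (simp add: Eu exp_diff)
    finally show "K1 * 1 + K2 * ln (- ln t) + K3 * ln (- ln (1 - t)) \<le> E t" .
  qed
  finally show ?thesis unfolding big c_def .
qed

end
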